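(* Let $p\geq 1$ and let $n_0<n_1<\cdots<n_p$ be positive integers with $n_i=n_0+id$ for a fixed positive integer $d$, such that $\gcd(n_0,\dots,n_p)=1$ and $\{n_0,\dots,n_p\}$ minimally generates the numerical semigroup $S_1=\langle n_0,\dots,n_p\rangle$. Let $s\in\mathrm{Ap}(S_1,n_p)$ and suppose $s=\sum_{i=0}^p\lambda_in_i=\sum_{i=0}^p\lambda_i'n_i$ with all $\lambda_i,\lambda_i'\in\mathbb{N}$. Then \[\sum_{i=0}^p\lambda_i(p-i)d=\sum_{i=0}^p\lambda_i'(p-i)d.\]
   Context: For a numerical semigroup $T$ and $0\neq a\in T$, the Apéry set is $\mathrm{Ap}(T,a)=\{s\in T: s-a\notin T\}$. *)

theory Defs
  imports Main
begin

inductive_set semigroup_gen :: "nat set \<Rightarrow> nat set" for A :: "nat set" where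
  zero: "0 \<in> semigroup_gen A"
| gen: "a \<in> A \<Longrightarrow> a \<in> semigroup_gen A"
| add: "x \<in> semigroup_gen A \<Longrightarrow> y \<in> semigroup_gen A \<Longrightarrow> x + y \<in> semigroup_gen A"

definition minimally_generates :: "nat set \<Rightarrow> bool" where
  "minimally_generates A \<longleftrightarrow> (\<forall>a\<in>A. a \<notin> semigroup_gen (A - {a}))"

text \<open>Apery set Ap(T,a) = {s in T. s - a not in T}, with s - a taken in the integers.\<close>
definition apery :: "nat set \<Rightarrow> nat \<Rightarrow> nat set" where
  "apery T a = {s \<in> T. \<not> (a \<le> s \<and> s - a \<in> T)}"

end

theory Submission
  imports Defs
begin

lemma mem_lemma:
  fixes p d n0 :: nat and n :: "nat \<Rightarrow> nat"
  assumes hn: "\<forall>i\<le>p. n i = n0 + i * d"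
  shows "t \<le> p * m \<Longrightarrow> m * n0 + d * t \<in> semigroup_gen (n ` {0..p})"
proof (induction m arbitrary: t)
  case 0
  then show ?case by (simp add: semigroup_gen.zero)
next
  case (Suc m)
  define j where "j = min t p"
  have "t - j \<le> p * m" using Suc.prems unfolding j_def by auto
  then have a: "m * n0 + d * (t - j) \<in> semigroup_gen (n ` {0..p})" by (rule Suc.IH)
  have "n j \<in> semigroup_gen (n ` {0..p})" by (rule semigroup_gen.gen) (auto simp: j_def)
  from semigroup_gen.add[OF a this]
  have "m * n0 + d * (t - j) + n j \<in> semigroup_gen (n ` {0..p})" .
  moreover have "m * n0 + d * (t - j) + n j = Suc m * n0 + d * t"
  proof -
    have jt: "j \<le> t" "j \<le> p" using j_def by auto
    have "d * j \<le> d * t" by (rule mult_le_mono2[OF jt(1)])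
    moreover have "d * (t - j) = d * t - d * j" by (simp add: diff_mult_distrib2)
    moreover have "n j = n0 + d * j" using hn jt by (simp add: mult.commute)
    moreover have "Suc m * n0 = m * n0 + n0" by simp
    ultimately show ?thesis by linarith
  qed
  ultimately show ?case by simp
qed

lemma key:
  fixes p d n0 s L L' A A' :: nat and n :: "nat \<Rightarrow> nat"
  assumes hp: "p \<ge> 1"
    and hn0: "n0 > 0"
    and hd: "d > 0"
    and hn: "\<forall>i\<le>p. n i = n0 + i * d"
    and hmin: "minimally_generates (n ` {0..p})"
    and hs: "s \<in> apery (semigroup_gen (n ` {0..p})) (n p)"
    and lt: "L' < L"
    and e: "s = L*n0 + d*A" and e': "s = L'*n0 + d*A'"
    and hA: "A \<le> p*L" and hA': "A' \<le> p*L'"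
  shows False
proof -
  let ?S = "semigroup_gen (n ` {0..p})"
  have np: "n p = n0 + d * p" using hn by (simp add: mult.commute)
  have nots: "\<not> (n p \<le> s \<and> s - n p \<in> ?S)" using hs unfolding apery_def by auto
  have AA: "A < A'"
  proof (rule ccontr)
    assume "\<not> A < A'"
    then have "L'*n0 + d*A' \<le> L'*n0 + d*A" by simp
    also have "\<dots> < L*n0 + d*A" using lt hn0 by simp
    finally show False using e e' by simp
  qed
  show False
  proof (cases "p \<le> A")
    case True
    then obtain m where m: "L = Suc m" using hA hp
      by (cases L) auto
    have "A - p \<le> p * m" using hA m by (simp add: algebra_simps)
    then have "m * n0 + d * (A - p) \<in> ?S" by (rule mem_lemma[OF hn])
    moreover have "s - n p = m * n0 + d * (A - p)" "n p \<le> s"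
    proof -
      have "d * p \<le> d * A" by (rule mult_le_mono2[OF True])
      moreover have "d * (A - p) = d * A - d * p" by (simp add: diff_mult_distrib2)
      moreover have "s = m * n0 + n0 + d * A" using e m by simp
      ultimately have "s - n p = m * n0 + d * (A - p) \<and> n p \<le> s"
        using np by linarith
      then show "s - n p = m * n0 + d * (A - p)" "n p \<le> s" by auto
    qed
    ultimately show False using nots by simp
  next
    case F: False
    show False
    proof (cases "p \<le> A'")
      case True
      then obtain m where m: "L' = Suc m" using hA' hp
        by (cases L') auto
      have "A' - p \<le> p * m" using hA' m by (simp add: algebra_simps)
      then have "m * n0 + d * (A' - p) \<in> ?S" by (rule mem_lemma[OF hn])
      moreover have "s - n p = m * n0 + d * (A' - p)" "n p \<le> s"
      proof -
      have "d * p \<le> d * A'" by (rule mult_le_mono2[OF True])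
      moreover have "d * (A' - p) = d * A' - d * p" by (simp add: diff_mult_distrib2)
      moreover have "s = m * n0 + n0 + d * A'" using e' m by simp
      ultimately have "s - n p = m * n0 + d * (A' - p) \<and> n p \<le> s"
        using np by linarith
      then show "s - n p = m * n0 + d * (A' - p)" "n p \<le> s" by auto
    qed
      ultimately show False using nots by simp
    next
      case False
      define t where "t = A' - A"
      define k where "k = L - L'"
      have t: "0 < t" "t < p" using AA False t_def by auto
      have "L*n0 + d*A = L'*n0 + d*A'" using e e' by simp
      then have kt: "k * n0 = d * t" unfolding k_def t_def using lt AA
        by (simp add: algebra_simps diff_mult_distrib diff_mult_distrib2)
      have nt: "n t = Suc k * n0" using hn t kt by (simp add: algebra_simps)
      have ntn0: "n t \<noteq> n0" using nt hn0 k_def lt by simp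
      have n0in: "n0 \<in> n ` {0..p} - {n t}"
        using ntn0 hn by (auto intro!: image_eqI[where x=0])
      have "\<And>j. j * n0 \<in> semigroup_gen (n ` {0..p} - {n t})"
      proof -
        fix j show "j * n0 \<in> semigroup_gen (n ` {0..p} - {n t})"
          by (induction j) (auto intro: semigroup_gen.zero semigroup_gen.add[OF semigroup_gen.gen[OF n0in]])
      qed
      then have "n t \<in> semigroup_gen (n ` {0..p} - {n t})" using nt by metis
      moreover have "n t \<in> n ` {0..p}" using t by auto
      ultimately show False using hmin unfolding minimally_generates_def by blast
    qed
  qed
qed

theorem lemma4p4:
  fixes p d n0 s :: nat and n lam lam' :: "nat \<Rightarrow> nat"
  assumes hp: "p \<ge> 1"
    and hn0: "n0 > 0"
    and hd: "d > 0"
    and hn: "\<forall>i\<le>p. n i = n0 + i * d"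
    and hgcd: "Gcd (n ` {0..p}) = 1"
    and hmin: "minimally_generates (n ` {0..p})"
    and hs: "s \<in> apery (semigroup_gen (n ` {0..p})) (n p)"
    and h1: "s = (\<Sum>i=0..p. lam i * n i)"
    and h2: "s = (\<Sum>i=0..p. lam' i * n i)"
  shows "(\<Sum>i=0..p. lam i * (p - i) * d) = (\<Sum>i=0..p. lam' i * (p - i) * d)"
proof -
  have rep: "(\<Sum>i=0..p. f i * n i) = (\<Sum>i=0..p. f i) * n0 + d * (\<Sum>i=0..p. f i * i)" for f
  proof -
    have "(\<Sum>i=0..p. f i * n i) = (\<Sum>i=0..p. f i * n0 + d * (f i * i))"
      using hn by (intro sum.cong) (auto simp: algebra_simps)
    then show ?thesis by (simp add: sum.distrib sum_distrib_left sum_distrib_right)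
  qed
  have bnd: "(\<Sum>i=0..p. f i * i) \<le> p * (\<Sum>i=0..p. f i)" for f
  proof -
    have "(\<Sum>i=0..p. f i * i) \<le> (\<Sum>i=0..p. p * f i)"
      by (intro sum_mono) auto
    then show ?thesis by (simp add: sum_distrib_left)
  qed
  have cmp: "(\<Sum>i=0..p. f i * (p - i)) + (\<Sum>i=0..p. f i * i) = p * (\<Sum>i=0..p. f i)" for f
  proof -
    have "(\<Sum>i=0..p. f i * (p - i)) + (\<Sum>i=0..p. f i * i) = (\<Sum>i=0..p. p * f i)"
      unfolding sum.distrib[symmetric]
      by (intro sum.cong) (auto simp: algebra_simps diff_mult_distrib2)
    then show ?thesis by (simp add: sum_distrib_left)
  qed
  define L where "L = (\<Sum>i=0..p. lam i)"
  define L' where "L' = (\<Sum>i=0..p. lam' i)"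
  define A where "A = (\<Sum>i=0..p. lam i * i)"
  define A' where "A' = (\<Sum>i=0..p. lam' i * i)"
  have e: "s = L*n0 + d*A" using h1 rep unfolding L_def A_def by simp
  have e': "s = L'*n0 + d*A'" using h2 rep unfolding L'_def A'_def by simp
  have hA: "A \<le> p*L" "A' \<le> p*L'" using bnd unfolding A_def L_def A'_def L'_def by auto
  have "\<not> L' < L" using key[OF hp hn0 hd hn hmin hs _ e e' hA] by blast
  moreover have "\<not> L < L'" using key[OF hp hn0 hd hn hmin hs _ e' e hA(2) hA(1)] by blast
  ultimately have LL: "L = L'" by simp
  then have AA: "A = A'" using e e' hd by simp
  have "(\<Sum>i=0..p. lam i * (p - i)) = (\<Sum>i=0..p. lam' i * (p - i))"
    using cmp[of lam] cmp[of lam'] LL AA unfolding L_def L'_def A_def A'_def by simp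
  then have "(\<Sum>i=0..p. lam i * (p - i)) * d = (\<Sum>i=0..p. lam' i * (p - i)) * d" by simp
  then show ?thesis by (simp add: sum_distrib_right)
qed

end
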